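(* Let $D_i$, $i\in\mathbb{Z}$, be i.i.d. non-negative integer-valued random variables with law $F$ having finite second moment. Fix $\alpha>0$. For $d\in\mathbb{N}$ let $D_i^d=\max\{D_i-d,0\}$ and $\mu_d=\mathbb{E}[D_i^d]$. If $d$ is such that $\mu_d<\alpha/18$, then $\mathbb{E}[|C^{d,\alpha}|]<\infty$.
   Context: A vertex $i\in\mathbb{Z}$ is $\alpha$-claimed on level $d$ iff $\sum_{k=i-m}^{i+m}D_k^d\ge\alpha m$ for some integer $m\ge1$. A cluster of $\alpha$-claimed vertices is a maximal set of consecutive $\alpha$-claimed vertices; $C^{d,\alpha}$ denotes the cluster containing the origin (empty if the origin is not $\alpha$-claimed). *)

theory Defs
  imports "HOL-Probability.Probability"
begin

text \<open>Truncated variable: D^d_k = max(D_k - d, 0); nat subtraction truncates.\<close>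
definition trunc_var :: "(int \<Rightarrow> 'a \<Rightarrow> nat) \<Rightarrow> nat \<Rightarrow> int \<Rightarrow> 'a \<Rightarrow> nat" where
  "trunc_var D d k \<omega> = D k \<omega> - d"

definition claimed :: "(int \<Rightarrow> 'a \<Rightarrow> nat) \<Rightarrow> nat \<Rightarrow> real \<Rightarrow> 'a \<Rightarrow> int \<Rightarrow> bool" where
  "claimed D d \<alpha> \<omega> i \<longleftrightarrow>
     (\<exists>m::nat. m \<ge> 1 \<and>
        (\<Sum>k\<in>{i - int m .. i + int m}. real (trunc_var D d k \<omega>)) \<ge> \<alpha> * real m)"

text \<open>The cluster of alpha-claimed vertices containing the origin: the maximal set of
  consecutive claimed vertices containing 0 (empty if 0 is not claimed).\<close>
definition cluster0 :: "(int \<Rightarrow> 'a \<Rightarrow> nat) \<Rightarrow> nat \<Rightarrow> real \<Rightarrow> 'a \<Rightarrow> int set" where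
  "cluster0 D d \<alpha> \<omega> =
     {j. \<forall>k. min 0 j \<le> k \<and> k \<le> max 0 j \<longrightarrow> claimed D d \<alpha> \<omega> k}"

definition set_size :: "int set \<Rightarrow> ennreal" where
  "set_size C = (if finite C then of_nat (card C) else \<infinity>)"

end

theory Submission
  imports Defs
begin


lemma (in prob_space) indep_vars_reindex:
  assumes ind: "indep_vars M' X (\<sigma> ` I)" and inj: "inj_on \<sigma> I"
  shows "indep_vars (\<lambda>i. M' (\<sigma> i)) (\<lambda>i. X (\<sigma> i)) I"
proof -
  have rv: "\<forall>i\<in>\<sigma> ` I. random_variable (M' i) (X i)"
   and ind2: "indep_sets (\<lambda>i. {X i -` A \<inter> space M | A. A \<in> sets (M' i)}) (\<sigma> ` I)"
    using ind unfolding indep_vars_def2 by auto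
  let ?F = "\<lambda>i. {X i -` A \<inter> space M | A. A \<in> sets (M' i)}"
  show ?thesis unfolding indep_vars_def2
  proof (intro conjI)
    show "\<forall>i\<in>I. random_variable (M' (\<sigma> i)) (X (\<sigma> i))" using rv by auto
    show "indep_sets (\<lambda>i. {X (\<sigma> i) -` A \<inter> space M |A. A \<in> sets (M' (\<sigma> i))}) I"
      unfolding indep_sets_def
    proof (intro conjI ballI allI impI)
      fix i assume "i \<in> I"
      then show "{X (\<sigma> i) -` A \<inter> space M |A. A \<in> sets (M' (\<sigma> i))} \<subseteq> events"
        using ind2 unfolding indep_sets_def by auto
    next
      fix J A assume J: "J \<subseteq> I" "J \<noteq> {}" "finite J"
        and A: "A \<in> Pi J (\<lambda>i. {X (\<sigma> i) -` A \<inter> space M |A. A \<in> sets (M' (\<sigma> i))})"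
      define B where "B k = A (the_inv_into J \<sigma> k)" for k
      have injJ: "inj_on \<sigma> J" using inj J(1) inj_on_subset by blast
      have Bs: "\<And>j. j \<in> J \<Longrightarrow> B (\<sigma> j) = A j"
        unfolding B_def using injJ by (simp add: the_inv_into_f_f)
      have "B \<in> Pi (\<sigma> ` J) ?F" using A Bs by (auto simp: Pi_iff)
      moreover have "\<sigma> ` J \<subseteq> \<sigma> ` I" "\<sigma> ` J \<noteq> {}" "finite (\<sigma> ` J)" using J by auto
      ultimately have "prob (\<Inter>k\<in>\<sigma> ` J. B k) = (\<Prod>k\<in>\<sigma> ` J. prob (B k))"
        using ind2 unfolding indep_sets_def by blast
      moreover have "(\<Inter>k\<in>\<sigma> ` J. B k) = (\<Inter>j\<in>J. A j)" using Bs by auto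
      moreover have "(\<Prod>k\<in>\<sigma> ` J. prob (B k)) = (\<Prod>j\<in>J. prob (A j))"
        using Bs injJ by (simp add: prod.reindex)
      ultimately show "prob (\<Inter>j\<in>J. A j) = (\<Prod>j\<in>J. prob (A j))" by simp
    qed
  qed
qed



lemma abs_le_sq1: "\<bar>t\<bar> \<le> t\<^sup>2 + 1" for t :: real
proof (cases "\<bar>t\<bar> \<le> 1")
  case True then show ?thesis by (simp add: add_increasing)
next
  case False
  then have "\<bar>t\<bar> * 1 \<le> \<bar>t\<bar> * \<bar>t\<bar>" by (intro mult_left_mono) auto
  moreover have "t*t = \<bar>t\<bar>*\<bar>t\<bar>" by simp
  ultimately show ?thesis unfolding power2_eq_square by linarith
qed

fun G :: "(nat \<Rightarrow> real) \<Rightarrow> nat \<Rightarrow> nat \<Rightarrow> (nat \<Rightarrow> nat) \<Rightarrow> real" where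
  "G f 0 k x = 0"
| "G f (Suc n) k x = max 0 (f (x k) + G f n (Suc k) x)"

lemma G_nonneg: "0 \<le> G f n k x"
  by (cases n) auto

lemma G_mono: "G f n k x \<le> G f (Suc n) k x"
proof (induction n arbitrary: k)
  case 0 then show ?case by simp
next
  case (Suc n)
  have "G f n (Suc k) x \<le> G f (Suc n) (Suc k) x" by (rule Suc.IH)
  then show ?case unfolding G.simps by (intro max.mono) simp_all
qed

lemma G_ge_sum: "(\<Sum>i<n. f (x (k+i))) \<le> G f n k x"
proof (induction n arbitrary: k)
  case 0 then show ?case by simp
next
  case (Suc n)
  have "(\<Sum>i<Suc n. f (x (k+i))) = f (x k) + (\<Sum>i<n. f (x (Suc k+i)))"
    by (subst sum.lessThan_Suc_shift) simp
  also have "\<dots> \<le> f (x k) + G f n (Suc k) x" using Suc[of "Suc k"] by simp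
  finally show ?case by simp
qed

lemma G_shift: "G f n (k + j) x = G f n k (\<lambda>i. x (j + i))"
proof (induction n arbitrary: k)
  case 0 then show ?case by simp
next
  case (Suc n)
  have "G f n (Suc k + j) x = G f n (Suc k) (\<lambda>i. x (j + i))" by (rule Suc.IH)
  then show ?case by (simp add: add.commute)
qed

lemma G_cong: "(\<And>i. k \<le> i \<Longrightarrow> i < k + n \<Longrightarrow> x i = y i) \<Longrightarrow> G f n k x = G f n k y"
proof (induction n arbitrary: k)
  case 0 then show ?case by simp
next
  case (Suc n)
  have "G f n (Suc k) x = G f n (Suc k) y" by (rule Suc.IH) (use Suc.prems in auto)
  moreover have "x k = y k" using Suc.prems by auto
  ultimately show ?case by simp
qed

lemma G_meas: "{k..<k+n} \<subseteq> I \<Longrightarrow> (\<lambda>x. G f n k x) \<in> borel_measurable (PiM I (\<lambda>_. count_space UNIV))"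
proof (induction n arbitrary: k)
  case 0 then show ?case by simp
next
  case (Suc n)
  have "k \<in> I" using Suc.prems by auto
  have m1: "(\<lambda>x. G f n (Suc k) x) \<in> borel_measurable (PiM I (\<lambda>_. count_space UNIV))"
    by (rule Suc.IH) (use Suc.prems in auto)
  have m2: "(\<lambda>x. f (x k)) \<in> borel_measurable (PiM I (\<lambda>_. count_space UNIV))"
    using measurable_component_singleton[OF \<open>k \<in> I\<close>, of "\<lambda>_. count_space UNIV"]
    by (intro measurable_compose[where f="\<lambda>x. x k" and g=f]) auto
  show ?case using m1 m2 by simp
qed



locale walk = prob_space +
  fixes E :: "nat \<Rightarrow> 'a \<Rightarrow> nat" and P :: "nat measure" and f :: "nat \<Rightarrow> real"
  assumes indE: "indep_vars (\<lambda>_. count_space UNIV) E UNIV"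
    and distE: "\<And>i. distr M (count_space UNIV) (E i) = P"
    and sqint: "integrable M (\<lambda>\<omega>. (f (E 0 \<omega>))\<^sup>2)"
    and negm: "expectation (\<lambda>\<omega>. f (E 0 \<omega>)) < 0"
begin

definition W where "W n j \<omega> = G f n j (\<lambda>i. E i \<omega>)"

lemma measE: "E i \<in> measurable M (count_space UNIV)"
  using indE unfolding indep_vars_def2 by auto

lemma W_Suc: "W (Suc n) j \<omega> = max 0 (f (E j \<omega>) + W n (Suc j) \<omega>)"
  by (simp add: W_def)

lemma W_0: "W 0 j \<omega> = 0" by (simp add: W_def)

lemma transfer_int:
  fixes h :: "nat \<Rightarrow> real"
  shows "integrable M (\<lambda>\<omega>. h (E i \<omega>)) \<longleftrightarrow> integrable M (\<lambda>\<omega>. h (E 0 \<omega>))"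
    and "(\<integral>\<omega>. h (E i \<omega>) \<partial>M) = (\<integral>\<omega>. h (E 0 \<omega>) \<partial>M)"
proof -
  have "integrable M (\<lambda>\<omega>. h (E k \<omega>)) \<longleftrightarrow> integrable P h" for k
    using integrable_distr_eq[OF measE[of k], of h] distE[of k] by simp
  then show "integrable M (\<lambda>\<omega>. h (E i \<omega>)) \<longleftrightarrow> integrable M (\<lambda>\<omega>. h (E 0 \<omega>))" by simp
  have "(\<integral>\<omega>. h (E k \<omega>) \<partial>M) = integral\<^sup>L P h" for k
    using integral_distr[OF measE[of k], of h] distE[of k] by simp
  then show "(\<integral>\<omega>. h (E i \<omega>) \<partial>M) = (\<integral>\<omega>. h (E 0 \<omega>) \<partial>M)" by simp
qed

lemma sqint_i: "integrable M (\<lambda>\<omega>. (f (E i \<omega>))\<^sup>2)"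
  using transfer_int(1)[of "\<lambda>v. (f v)\<^sup>2" i] sqint by simp

lemma meas_fE: "(\<lambda>\<omega>. f (E i \<omega>)) \<in> borel_measurable M"
  using measE[of i] by (intro measurable_compose[where f="E i" and g=f]) auto

lemma int_i: "integrable M (\<lambda>\<omega>. f (E i \<omega>))"
proof (rule Bochner_Integration.integrable_bound)
  show "integrable M (\<lambda>\<omega>. (f (E i \<omega>))\<^sup>2 + 1)" using sqint_i by simp
  show "(\<lambda>\<omega>. f (E i \<omega>)) \<in> borel_measurable M" by (rule meas_fE)
  show "AE x in M. norm (f (E i x)) \<le> norm ((f (E i x))\<^sup>2 + 1)"
    using abs_le_sq1 by simp
qed

lemma W_meas: "(\<lambda>\<omega>. W n j \<omega>) \<in> borel_measurable M"
proof (induction n arbitrary: j)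
  case 0 then show ?case by (simp add: W_0)
next
  case (Suc n)
  show ?case unfolding W_Suc using Suc[of "Suc j"] meas_fE[of j] by measurable
qed

lemma W_int: "integrable M (\<lambda>\<omega>. W n j \<omega>) \<and> integrable M (\<lambda>\<omega>. (W n j \<omega>)\<^sup>2)"
proof (induction n arbitrary: j)
  case 0 then show ?case by (simp add: W_0)
next
  case (Suc n)
  have i1: "integrable M (\<lambda>\<omega>. W n (Suc j) \<omega>)" and i2: "integrable M (\<lambda>\<omega>. (W n (Suc j) \<omega>)\<^sup>2)"
    using Suc by auto
  have "integrable M (\<lambda>\<omega>. W (Suc n) j \<omega>)"
  proof (rule Bochner_Integration.integrable_bound)
    show "integrable M (\<lambda>\<omega>. \<bar>f (E j \<omega>)\<bar> + \<bar>W n (Suc j) \<omega>\<bar>)" using i1 int_i[of j] by simp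
    show "(\<lambda>\<omega>. W (Suc n) j \<omega>) \<in> borel_measurable M" by (rule W_meas)
    show "AE x in M. norm (W (Suc n) j x) \<le> norm (\<bar>f (E j x)\<bar> + \<bar>W n (Suc j) x\<bar>)"
      by (auto simp: W_Suc)
  qed
  moreover have "integrable M (\<lambda>\<omega>. (W (Suc n) j \<omega>)\<^sup>2)"
  proof (rule Bochner_Integration.integrable_bound)
    show "integrable M (\<lambda>\<omega>. 2 * (f (E j \<omega>))\<^sup>2 + 2 * (W n (Suc j) \<omega>)\<^sup>2)" using i2 sqint_i[of j] by simp
    show "(\<lambda>\<omega>. (W (Suc n) j \<omega>)\<^sup>2) \<in> borel_measurable M" using W_meas by measurable
    show "AE x in M. norm ((W (Suc n) j x)\<^sup>2) \<le> norm (2 * (f (E j x))\<^sup>2 + 2 * (W n (Suc j) x)\<^sup>2)"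
    proof
      fix x
      have a: "(max 0 t)\<^sup>2 \<le> t\<^sup>2" for t :: real
        by (cases "t \<le> 0") (auto simp: max_def)
      have b: "(a + b)\<^sup>2 \<le> 2 * a\<^sup>2 + 2 * b\<^sup>2" for a b :: real
        using sum_squares_ge_zero[of "a - b" 0] by (simp add: power2_eq_square algebra_simps)
      show "norm ((W (Suc n) j x)\<^sup>2) \<le> norm (2 * (f (E j x))\<^sup>2 + 2 * (W n (Suc j) x)\<^sup>2)"
        unfolding W_Suc using a[of "f (E j x) + W n (Suc j) x"] b[of "f (E j x)" "W n (Suc j) x"] by simp
    qed
  qed
  ultimately show ?case by simp
qed

lemma distr_vec:
  assumes "n > 0"
  shows "distr M (PiM {..<n} (\<lambda>_. count_space UNIV)) (\<lambda>\<omega>. \<lambda>i\<in>{..<n}. E (j+i) \<omega>)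
         = PiM {..<n} (\<lambda>_::nat. P)"
proof -
  have "indep_vars (\<lambda>_. count_space UNIV) E (((+) j) ` UNIV)"
    by (rule indep_vars_subset[OF indE]) auto
  then have "indep_vars (\<lambda>_. count_space UNIV) (\<lambda>i. E (j+i)) UNIV"
    using indep_vars_reindex[where M'="\<lambda>_. count_space UNIV" and X=E and \<sigma>="(+) j" and I=UNIV] by (simp add: inj_on_def)
  then have ind: "indep_vars (\<lambda>_. count_space UNIV) (\<lambda>i. E (j+i)) {..<n}"
    by (rule indep_vars_subset) auto
  have "distr M (PiM {..<n} (\<lambda>_. count_space UNIV)) (\<lambda>\<omega>. \<lambda>i\<in>{..<n}. E (j+i) \<omega>)
         = PiM {..<n} (\<lambda>i. distr M (count_space UNIV) (E (j+i)))"
    using indep_vars_iff_distr_eq_PiM[where I="{..<n}" and M'="\<lambda>_. count_space UNIV" and X="\<lambda>i. E (j+i)"] ind assms measE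
    by auto
  then show ?thesis using distE by simp
qed

lemma W_alt: "W n j \<omega> = G f n 0 (\<lambda>i\<in>{..<n}. E (j+i) \<omega>)"
proof -
  have "W n j \<omega> = G f n (0 + j) (\<lambda>i. E i \<omega>)" by (simp add: W_def)
  also have "\<dots> = G f n 0 (\<lambda>i. E (j+i) \<omega>)" by (rule G_shift)
  also have "\<dots> = G f n 0 (\<lambda>i\<in>{..<n}. E (j+i) \<omega>)" by (rule G_cong) auto
  finally show ?thesis .
qed

lemma W_shift:
  fixes h :: "real \<Rightarrow> real"
  assumes hm: "h \<in> borel_measurable borel"
  shows "(\<integral>\<omega>. h (W n j \<omega>) \<partial>M) = (\<integral>\<omega>. h (W n 0 \<omega>) \<partial>M)"
proof (cases "n = 0")
  case True then show ?thesis by (simp add: W_0)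
next
  case False
  have "(\<integral>\<omega>. h (W n k \<omega>) \<partial>M) = (\<integral>x. h (G f n 0 x) \<partial>(PiM {..<n} (\<lambda>_. P)))" for k
  proof -
    have vm: "(\<lambda>\<omega>. \<lambda>i\<in>{..<n}. E (k+i) \<omega>) \<in> measurable M (PiM {..<n} (\<lambda>_. count_space UNIV))"
      using measE by (intro measurable_restrict) auto
    have gm: "(\<lambda>x. h (G f n 0 x)) \<in> borel_measurable (PiM {..<n} (\<lambda>_. count_space UNIV))"
    proof -
      have "G f n 0 \<in> borel_measurable (Pi\<^sub>M {..<n} (\<lambda>_. count_space UNIV))"
        by (rule G_meas) auto
      then show ?thesis by (intro measurable_compose[OF _ hm]) auto
    qed
    have "(\<integral>\<omega>. h (W n k \<omega>) \<partial>M) = (\<integral>\<omega>. h (G f n 0 (\<lambda>i\<in>{..<n}. E (k+i) \<omega>)) \<partial>M)"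
      by (simp add: W_alt)
    also have "\<dots> = (\<integral>x. h (G f n 0 x) \<partial>(distr M (PiM {..<n} (\<lambda>_. count_space UNIV)) (\<lambda>\<omega>. \<lambda>i\<in>{..<n}. E (k+i) \<omega>)))"
      by (rule integral_distr[OF vm gm, symmetric])
    also have "\<dots> = (\<integral>x. h (G f n 0 x) \<partial>(PiM {..<n} (\<lambda>_. P)))"
      using distr_vec[of n k] False by simp
    finally show ?thesis .
  qed
  then show ?thesis by simp
qed

lemma W_indep:
  "(\<integral>\<omega>. f (E j \<omega>) * W n (Suc j) \<omega> \<partial>M) = (\<integral>\<omega>. f (E j \<omega>) \<partial>M) * (\<integral>\<omega>. W n (Suc j) \<omega> \<partial>M)"
proof -
  let ?B = "{Suc j..<Suc j + n}"
  have iv: "indep_var (PiM {j} (\<lambda>_. count_space UNIV)) (\<lambda>\<omega>. restrict (\<lambda>i. E i \<omega>) {j})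
                     (PiM ?B (\<lambda>_. count_space UNIV)) (\<lambda>\<omega>. restrict (\<lambda>i. E i \<omega>) ?B)"
    by (rule indep_var_restrict[OF indE]) auto
  have m1: "(\<lambda>x. f (x j)) \<in> borel_measurable (PiM {j} (\<lambda>_. count_space UNIV))"
    by (rule measurable_compose[OF measurable_component_singleton[where i=j and I="{j}" and M="\<lambda>_. count_space UNIV"]]) auto
  have m2: "(\<lambda>x. G f n (Suc j) x) \<in> borel_measurable (PiM ?B (\<lambda>_. count_space UNIV))"
    by (rule G_meas) auto
  have "indep_var borel ((\<lambda>x. f (x j)) \<circ> (\<lambda>\<omega>. restrict (\<lambda>i. E i \<omega>) {j}))
                  borel ((\<lambda>x. G f n (Suc j) x) \<circ> (\<lambda>\<omega>. restrict (\<lambda>i. E i \<omega>) ?B))"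
    by (rule indep_var_compose[OF iv m1 m2])
  moreover have "((\<lambda>x. f (x j)) \<circ> (\<lambda>\<omega>. restrict (\<lambda>i. E i \<omega>) {j})) = (\<lambda>\<omega>. f (E j \<omega>))"
    by (simp add: fun_eq_iff)
  moreover have "((\<lambda>x. G f n (Suc j) x) \<circ> (\<lambda>\<omega>. restrict (\<lambda>i. E i \<omega>) ?B)) = W n (Suc j)"
    unfolding W_def by (auto simp: fun_eq_iff intro!: G_cong)
  ultimately have "indep_var borel (\<lambda>\<omega>. f (E j \<omega>)) borel (W n (Suc j))" by simp
  then show ?thesis
    using indep_var_lebesgue_integral[of "\<lambda>\<omega>. f (E j \<omega>)" "W n (Suc j)"] int_i W_int by auto
qed

lemma W_nonneg: "0 \<le> W n j \<omega>"
  by (simp add: W_def G_nonneg)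

lemma W_mono: "W n j \<omega> \<le> W (Suc n) j \<omega>"
  unfolding W_def by (rule G_mono)

lemma prod_int: "integrable M (\<lambda>\<omega>. f (E j \<omega>) * W n k \<omega>)"
proof (rule Bochner_Integration.integrable_bound)
  show "integrable M (\<lambda>\<omega>. (f (E j \<omega>))\<^sup>2 + (W n k \<omega>)\<^sup>2)" using sqint_i W_int by simp
  show "(\<lambda>\<omega>. f (E j \<omega>) * W n k \<omega>) \<in> borel_measurable M" using meas_fE W_meas by measurable
  show "AE x in M. norm (f (E j x) * W n k x) \<le> norm ((f (E j x))\<^sup>2 + (W n k x)\<^sup>2)"
  proof
    fix x
    have "\<bar>a * b\<bar> \<le> a\<^sup>2 + b\<^sup>2" for a b :: real
    proof -
      have "0 \<le> (\<bar>a\<bar> - \<bar>b\<bar>) * (\<bar>a\<bar> - \<bar>b\<bar>)" by simp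
      then have "2 * (\<bar>a\<bar> * \<bar>b\<bar>) \<le> \<bar>a\<bar>*\<bar>a\<bar> + \<bar>b\<bar>*\<bar>b\<bar>" by (simp add: algebra_simps)
      moreover have "0 \<le> \<bar>a\<bar> * \<bar>b\<bar>" by simp
      moreover have "\<bar>a\<bar>*\<bar>a\<bar> = a\<^sup>2" "\<bar>b\<bar>*\<bar>b\<bar> = b\<^sup>2" by (simp_all add: power2_eq_square)
      ultimately have "\<bar>a\<bar> * \<bar>b\<bar> \<le> a\<^sup>2 + b\<^sup>2" by linarith
      then show ?thesis by (simp add: abs_mult)
    qed
    then show "norm (f (E j x) * W n k x) \<le> norm ((f (E j x))\<^sup>2 + (W n k x)\<^sup>2)" by simp
  qed
qed

lemma lindley:
  "0 \<le> expectation (\<lambda>\<omega>. (f (E 0 \<omega>))\<^sup>2) + 2 * expectation (\<lambda>\<omega>. f (E 0 \<omega>)) * (\<integral>\<omega>. W n 0 \<omega> \<partial>M)"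
proof -
  let ?m = "expectation (\<lambda>\<omega>. f (E 0 \<omega>))"
  let ?s = "expectation (\<lambda>\<omega>. (f (E 0 \<omega>))\<^sup>2)"
  have pw: "(W (Suc n) 0 \<omega>)\<^sup>2 \<le> (f (E 0 \<omega>))\<^sup>2 + 2 * (f (E 0 \<omega>) * W n 1 \<omega>) + (W n 1 \<omega>)\<^sup>2" for \<omega>
  proof -
    have a: "(max 0 t)\<^sup>2 \<le> t\<^sup>2" for t :: real
      by (cases "t \<le> 0") (auto simp: max_def)
    have "(W (Suc n) 0 \<omega>)\<^sup>2 \<le> (f (E 0 \<omega>) + W n 1 \<omega>)\<^sup>2"
      unfolding W_Suc using a by simp
    also have "\<dots> = (f (E 0 \<omega>))\<^sup>2 + 2 * (f (E 0 \<omega>) * W n 1 \<omega>) + (W n 1 \<omega>)\<^sup>2"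
      by (simp add: power2_eq_square algebra_simps)
    finally show ?thesis .
  qed
  have i1: "integrable M (\<lambda>\<omega>. (W n 1 \<omega>)\<^sup>2)" "integrable M (\<lambda>\<omega>. (W (Suc n) 0 \<omega>)\<^sup>2)"
    "integrable M (\<lambda>\<omega>. (W n 0 \<omega>)\<^sup>2)" using W_int by auto
  have i2: "integrable M (\<lambda>\<omega>. 2 * (f (E 0 \<omega>) * W n 1 \<omega>))" using prod_int by simp
  have "(\<integral>\<omega>. (W (Suc n) 0 \<omega>)\<^sup>2 \<partial>M) \<le>
        (\<integral>\<omega>. (f (E 0 \<omega>))\<^sup>2 + 2 * (f (E 0 \<omega>) * W n 1 \<omega>) + (W n 1 \<omega>)\<^sup>2 \<partial>M)"
    using pw i1 i2 sqint_i by (intro integral_mono) auto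
  also have "\<dots> = ?s + 2 * (\<integral>\<omega>. f (E 0 \<omega>) * W n 1 \<omega> \<partial>M) + (\<integral>\<omega>. (W n 1 \<omega>)\<^sup>2 \<partial>M)"
    using i1 i2 sqint_i[of 0] prod_int[of 0 n 1] by simp
  also have "(\<integral>\<omega>. f (E 0 \<omega>) * W n 1 \<omega> \<partial>M) = ?m * (\<integral>\<omega>. W n 1 \<omega> \<partial>M)"
    using W_indep[of 0 n] by simp
  also have "(\<integral>\<omega>. W n 1 \<omega> \<partial>M) = (\<integral>\<omega>. W n 0 \<omega> \<partial>M)"
    using W_shift[of "\<lambda>x. x" n 1] by simp
  also have "(\<integral>\<omega>. (W n 1 \<omega>)\<^sup>2 \<partial>M) = (\<integral>\<omega>. (W n 0 \<omega>)\<^sup>2 \<partial>M)"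
    using W_shift[of "\<lambda>x. x\<^sup>2" n 1] by simp
  finally have A: "(\<integral>\<omega>. (W (Suc n) 0 \<omega>)\<^sup>2 \<partial>M) \<le> ?s + 2 * (?m * (\<integral>\<omega>. W n 0 \<omega> \<partial>M)) + (\<integral>\<omega>. (W n 0 \<omega>)\<^sup>2 \<partial>M)" .
  have "(\<integral>\<omega>. (W n 0 \<omega>)\<^sup>2 \<partial>M) \<le> (\<integral>\<omega>. (W (Suc n) 0 \<omega>)\<^sup>2 \<partial>M)"
    using i1 W_mono W_nonneg by (intro integral_mono) (auto intro: power_mono)
  with A show ?thesis by simp
qed

lemma walk_bound: "(\<integral>\<^sup>+\<omega>. (SUP n. ennreal (\<Sum>i<n. f (E i \<omega>))) \<partial>M) < \<infinity>"
proof -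
  let ?m = "expectation (\<lambda>\<omega>. f (E 0 \<omega>))"
  let ?s = "expectation (\<lambda>\<omega>. (f (E 0 \<omega>))\<^sup>2)"
  have eb: "(\<integral>\<omega>. W n 0 \<omega> \<partial>M) \<le> ?s / (- 2 * ?m)" for n
  proof -
    have c: "0 < - 2 * ?m" using negm by simp
    moreover have h: "(\<integral>\<omega>. W n 0 \<omega> \<partial>M) * (- 2 * ?m) \<le> ?s" using lindley[of n] by (simp add: algebra_simps)
    ultimately show ?thesis using pos_le_divide_eq[OF c] by blast
  qed
  have "(\<integral>\<^sup>+\<omega>. (SUP n. ennreal (\<Sum>i<n. f (E i \<omega>))) \<partial>M) \<le> (\<integral>\<^sup>+\<omega>. (SUP n. ennreal (W n 0 \<omega>)) \<partial>M)"
  proof (intro nn_integral_mono SUP_mono)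
    fix \<omega> n
    have "(\<Sum>i<n. f (E i \<omega>)) \<le> W n 0 \<omega>" unfolding W_def using G_ge_sum[where f=f and x="\<lambda>i. E i \<omega>" and n=n and k=0] by (simp add: W_def)
    then show "\<exists>m\<in>UNIV. ennreal (\<Sum>i<n. f (E i \<omega>)) \<le> ennreal (W m 0 \<omega>)" by (intro bexI[of _ n]) (auto intro: ennreal_leI)
  qed
  also have "\<dots> = (SUP n. (\<integral>\<^sup>+\<omega>. ennreal (W n 0 \<omega>) \<partial>M))"
  proof (rule nn_integral_monotone_convergence_SUP)
    show "incseq (\<lambda>n \<omega>. ennreal (W n 0 \<omega>))"
      by (intro incseq_SucI le_funI ennreal_leI W_mono)
    show "\<And>i. (\<lambda>\<omega>. ennreal (W i 0 \<omega>)) \<in> borel_measurable M" using W_meas by measurable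
  qed
  also have "\<dots> = (SUP n. ennreal (\<integral>\<omega>. W n 0 \<omega> \<partial>M))"
    using W_int W_nonneg by (subst nn_integral_eq_integral) auto
  also have "\<dots> \<le> ennreal (?s / (- 2 * ?m))"
    using eb by (intro SUP_least ennreal_leI) auto
  also have "\<dots> < \<infinity>" by simp
  finally show ?thesis .
qed

end



lemma cover:
  fixes X :: "int \<Rightarrow> real" and mm :: "int \<Rightarrow> nat" and J :: "int set" and \<alpha> :: real
  assumes fin: "finite J" and Xnn: "\<And>k. 0 \<le> X k" and apos: "\<alpha> > 0"
    and win: "\<And>i. i \<in> J \<Longrightarrow> \<alpha> * real (mm i) \<le> (\<Sum>k\<in>{i - int (mm i)..i + int (mm i)}. X k)"
    and mpos: "\<And>i. i \<in> J \<Longrightarrow> mm i \<ge> 1"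
  shows "\<alpha>/7 * real (card (\<Union>i\<in>J. {i - int (mm i)..i + int (mm i)}))
           \<le> (\<Sum>k\<in>(\<Union>i\<in>J. {i - int (mm i)..i + int (mm i)}). X k)"
  using fin win mpos
proof (induction J rule: finite_psubset_induct)
  case (psubset J)
  define Wd where "Wd i = {i - int (mm i)..i + int (mm i)}" for i
  show ?case
  proof (cases "J = {}")
    case True then show ?thesis by simp
  next
    case False
    have "Max (mm ` J) \<in> mm ` J" using False psubset.hyps by (intro Max_in) auto
    then obtain i0 where i0: "i0 \<in> J" "mm i0 = Max (mm ` J)" by auto
    have mx: "mm i \<le> mm i0" if "i \<in> J" for i using i0 that psubset.hyps by simp
    define m where "m = mm i0"
    define J' where "J' = {i\<in>J. \<bar>i - i0\<bar> > 2 * int m}"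
    have "i0 \<notin> J'" unfolding J'_def by auto
    then have sub: "J' \<subset> J" using i0 unfolding J'_def by blast
    have IH: "\<alpha>/7 * real (card (\<Union>i\<in>J'. Wd i)) \<le> (\<Sum>k\<in>(\<Union>i\<in>J'. Wd i). X k)"
      using psubset.IH[OF sub] psubset.prems sub unfolding Wd_def by auto
    define U' where "U' = (\<Union>i\<in>J'. Wd i)"
    define U where "U = (\<Union>i\<in>J. Wd i)"
    have finU': "finite U'" unfolding U'_def Wd_def using sub psubset.hyps
      by (intro finite_UN_I) (auto intro: finite_subset)
    have finU: "finite U" unfolding U_def Wd_def using psubset.hyps by auto
    have disj: "U' \<inter> Wd i0 = {}"
    proof -
      { fix k i assume "i \<in> J'" "k \<in> Wd i" "k \<in> Wd i0"
        then have "\<bar>i - i0\<bar> > 2 * int m" "mm i \<le> m" "\<bar>k - i\<bar> \<le> int (mm i)" "\<bar>k - i0\<bar> \<le> int m"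
          using mx unfolding J'_def Wd_def m_def by auto
        then have False by linarith }
      then show ?thesis unfolding U'_def by blast
    qed
    have U'W: "U' \<union> Wd i0 \<subseteq> U" unfolding U'_def U_def J'_def using i0 by auto
    have Usub: "U \<subseteq> U' \<union> {i0 - 3 * int m..i0 + 3 * int m}"
    proof
      fix k assume "k \<in> U"
      then obtain i where i: "i \<in> J" "k \<in> Wd i" unfolding U_def by auto
      show "k \<in> U' \<union> {i0 - 3 * int m..i0 + 3 * int m}"
      proof (cases "i \<in> J'")
        case True then show ?thesis using i unfolding U'_def by auto
      next
        case False
        then have "\<bar>i - i0\<bar> \<le> 2 * int m" using i unfolding J'_def by auto
        moreover have "\<bar>k - i\<bar> \<le> int m" using i mx[of i] unfolding Wd_def m_def by auto
        ultimately show ?thesis by auto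
      qed
    qed
    have "card U \<le> card (U' \<union> {i0 - 3 * int m..i0 + 3 * int m})"
      using Usub finU' by (intro card_mono) auto
    also have "\<dots> \<le> card U' + card {i0 - 3 * int m..i0 + 3 * int m}" by (rule card_Un_le)
    also have "card {i0 - 3 * int m..i0 + 3 * int m} = 6 * m + 1" by simp
    finally have cU: "real (card U) \<le> real (card U') + 6 * real m + 1" by linarith
    have m1: "m \<ge> 1" using psubset.prems(2)[OF i0(1)] unfolding m_def by simp
    have "(\<Sum>k\<in>U' \<union> Wd i0. X k) \<le> (\<Sum>k\<in>U. X k)"
      using U'W finU Xnn by (intro sum_mono2) auto
    moreover have "(\<Sum>k\<in>U' \<union> Wd i0. X k) = (\<Sum>k\<in>U'. X k) + (\<Sum>k\<in>Wd i0. X k)"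
      using disj finU' by (intro sum.union_disjoint) (auto simp: Wd_def)
    moreover have "\<alpha> * real m \<le> (\<Sum>k\<in>Wd i0. X k)"
      using psubset.prems(1)[OF i0(1)] unfolding Wd_def m_def by simp
    moreover have "\<alpha>/7 * real (card U') \<le> (\<Sum>k\<in>U'. X k)" using IH unfolding U'_def .
    moreover have "\<alpha>/7 * real (card U) \<le> \<alpha>/7 * real (card U') + \<alpha> * real m"
    proof -
      have "\<alpha>/7 * real (card U) \<le> \<alpha>/7 * (real (card U') + 6 * real m + 1)"
        using cU apos by (intro mult_left_mono) auto
      also have "\<dots> \<le> \<alpha>/7 * (real (card U') + 7 * real m)"
        using m1 apos by (intro mult_left_mono) auto
      finally show ?thesis by (simp add: algebra_simps)
    qed
    ultimately have "\<alpha>/7 * real (card U) \<le> (\<Sum>k\<in>U. X k)" by linarith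
    then show ?thesis unfolding U_def Wd_def .
  qed
qed

lemma union_interval:
  fixes mm :: "int \<Rightarrow> nat"
  assumes "p \<le> q"
  shows "\<exists>a b. a \<le> p \<and> q \<le> b \<and> (\<Union>i\<in>{p..q}. {i - int (mm i)..i + int (mm i)}) = {a..b}"
proof -
  define a where "a = Min ((\<lambda>i. i - int (mm i)) ` {p..q})"
  define b where "b = Max ((\<lambda>i. i + int (mm i)) ` {p..q})"
  have ne: "{p..q} \<noteq> {}" using assms by auto
  have "a \<in> (\<lambda>i. i - int (mm i)) ` {p..q}" unfolding a_def using ne by (intro Min_in) auto
  then obtain ia where ia: "ia \<in> {p..q}" "a = ia - int (mm ia)" by auto
  have "b \<in> (\<lambda>i. i + int (mm i)) ` {p..q}" unfolding b_def using ne by (intro Max_in) auto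
  then obtain ib where ib: "ib \<in> {p..q}" "b = ib + int (mm ib)" by auto
  have amin: "a \<le> i - int (mm i)" if "i \<in> {p..q}" for i unfolding a_def using that by (intro Min_le) auto
  have bmax: "i + int (mm i) \<le> b" if "i \<in> {p..q}" for i unfolding b_def using that by (intro Max_ge) auto
  have "a \<le> p" using amin[of p] assms by auto
  moreover have "q \<le> b" using bmax[of q] assms by auto
  moreover have "(\<Union>i\<in>{p..q}. {i - int (mm i)..i + int (mm i)}) = {a..b}"
  proof
    show "(\<Union>i\<in>{p..q}. {i - int (mm i)..i + int (mm i)}) \<subseteq> {a..b}"
      using amin bmax by fastforce
    show "{a..b} \<subseteq> (\<Union>i\<in>{p..q}. {i - int (mm i)..i + int (mm i)})"
    proof
      fix t assume t: "t \<in> {a..b}"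
      show "t \<in> (\<Union>i\<in>{p..q}. {i - int (mm i)..i + int (mm i)})"
      proof (cases "t < p")
        case True then show ?thesis using t ia by (intro UN_I[of ia]) auto
      next
        case False
        show ?thesis
        proof (cases "t > q")
          case True then show ?thesis using t ib by (intro UN_I[of ib]) auto
        next
          case False2: False
          then show ?thesis using False by (intro UN_I[of t]) auto
        qed
      qed
    qed
  qed
  ultimately show ?thesis by blast
qed

lemma sumR: "(\<Sum>k\<in>{0..int n}. X k) = X 0 + (\<Sum>i<n. X (int i + 1))"
proof (induction n)
  case 0 then show ?case by simp
next
  case (Suc n)
  have e: "{0..int (Suc n)} = insert (int n + 1) {0..int n}" by auto
  have "(\<Sum>k\<in>{0..int (Suc n)}. X k) = X (int n + 1) + (\<Sum>k\<in>{0..int n}. X k)"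
    unfolding e by (subst sum.insert) auto
  then show ?case using Suc by (simp add: algebra_simps)
qed

lemma sumL: "(\<Sum>k\<in>{- int n..int b}. X k) = (\<Sum>k\<in>{0..int b}. X k) + (\<Sum>i<n. X (- int i - 1))"
proof (induction n)
  case 0 then show ?case by simp
next
  case (Suc n)
  have e: "{- int (Suc n)..int b} = insert (- int n - 1) {- int n..int b}" by auto
  have "(\<Sum>k\<in>{- int (Suc n)..int b}. X k) = X (- int n - 1) + (\<Sum>k\<in>{- int n..int b}. X k)"
    unfolding e by (subst sum.insert) auto
  then show ?case using Suc by (simp add: algebra_simps)
qed

lemma det:
  fixes X :: "int \<Rightarrow> real" and \<alpha> \<gamma> :: real and j :: int
  assumes Xnn: "\<And>k. 0 \<le> X k" and apos: "\<alpha> > 0" and g0: "0 \<le> \<gamma>" and ga: "\<gamma> \<le> \<alpha>/7"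
    and cl: "\<And>i. min 0 j \<le> i \<Longrightarrow> i \<le> max 0 j \<Longrightarrow>
              \<exists>m::nat. m \<ge> 1 \<and> \<alpha> * real m \<le> (\<Sum>k\<in>{i - int m..i + int m}. X k)"
  shows "\<exists>na nb. (\<alpha>/7 - \<gamma>) * (real_of_int \<bar>j\<bar> + 1)
           \<le> X 0 + (\<Sum>i<nb. X (int i + 1) - \<gamma>) + (\<Sum>i<na. X (- int i - 1) - \<gamma>)"
proof -
  define J where "J = {min 0 j..max 0 j}"
  define mm where "mm i = (SOME m::nat. m \<ge> 1 \<and> \<alpha> * real m \<le> (\<Sum>k\<in>{i - int m..i + int m}. X k))" for i
  have mmp: "mm i \<ge> 1 \<and> \<alpha> * real (mm i) \<le> (\<Sum>k\<in>{i - int (mm i)..i + int (mm i)}. X k)" if "i \<in> J" for i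
  proof -
    have "\<exists>m::nat. m \<ge> 1 \<and> \<alpha> * real m \<le> (\<Sum>k\<in>{i - int m..i + int m}. X k)"
      using cl[of i] that unfolding J_def by simp
    then show ?thesis unfolding mm_def by (rule someI_ex)
  qed
  obtain a b where ab: "a \<le> min 0 j" "max 0 j \<le> b" "(\<Union>i\<in>J. {i - int (mm i)..i + int (mm i)}) = {a..b}"
  proof -
    have "min 0 j \<le> max 0 j" by simp
    from union_interval[where p="min 0 j" and q="max 0 j" and mm=mm, OF this] that show thesis
      unfolding J_def by blast
  qed
  have cov: "\<alpha>/7 * real (card {a..b}) \<le> (\<Sum>k\<in>{a..b}. X k)"
  proof -
    have "finite J" unfolding J_def by simp
    from cover[where J=J and X=X and \<alpha>=\<alpha> and mm=mm, OF this Xnn apos] mmp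
    have "\<alpha>/7 * real (card (\<Union>i\<in>J. {i - int (mm i)..i + int (mm i)}))
           \<le> (\<Sum>k\<in>(\<Union>i\<in>J. {i - int (mm i)..i + int (mm i)}). X k)" by blast
    then show ?thesis unfolding ab(3) .
  qed
  define na where "na = nat (- a)"
  define nb where "nb = nat b"
  have a_eq: "a = - int na" and b_eq: "b = int nb" using ab unfolding na_def nb_def by auto
  have cab: "real (card {a..b}) = real na + real nb + 1" using a_eq b_eq by simp
  have sab: "(\<Sum>k\<in>{a..b}. X k) = X 0 + (\<Sum>i<nb. X (int i + 1)) + (\<Sum>i<na. X (- int i - 1))"
    unfolding a_eq b_eq sumL sumR by simp
  have cj: "real_of_int \<bar>j\<bar> + 1 \<le> real na + real nb + 1" using ab a_eq b_eq by auto
  have "(\<alpha>/7 - \<gamma>) * (real_of_int \<bar>j\<bar> + 1) \<le> (\<alpha>/7 - \<gamma>) * (real na + real nb + 1)"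
    using cj ga by (intro mult_left_mono) auto
  also have "\<dots> = \<alpha>/7 * (real na + real nb + 1) - \<gamma> * real nb - \<gamma> * real na - \<gamma>"
    by (simp add: algebra_simps)
  also have "\<dots> \<le> X 0 + (\<Sum>i<nb. X (int i + 1)) + (\<Sum>i<na. X (- int i - 1)) - \<gamma> * real nb - \<gamma> * real na"
    using cov cab sab g0 by simp
  also have "\<dots> = X 0 + (\<Sum>i<nb. X (int i + 1) - \<gamma>) + (\<Sum>i<na. X (- int i - 1) - \<gamma>)"
    by (simp add: sum_subtractf algebra_simps)
  finally show ?thesis by blast
qed



lemma ennreal_sum3:
  fixes x y z w :: real
  assumes "x \<le> y + z + w" "0 \<le> y"
  shows "ennreal x \<le> ennreal y + ennreal z + ennreal w"
proof -
  have "x \<le> y + max 0 z + max 0 w" using assms by linarith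
  then have "ennreal x \<le> ennreal (y + max 0 z + max 0 w)" by (rule ennreal_leI)
  also have "\<dots> = ennreal y + ennreal (max 0 z) + ennreal (max 0 w)"
    using assms by (simp add: ennreal_plus)
  also have "\<dots> = ennreal y + ennreal z + ennreal w" by (simp add: ennreal_max_0)
  finally show ?thesis .
qed

lemma size_bound:
  fixes C :: "int set" and B :: ennreal and c :: real
  assumes cpos: "c > 0" and hb: "\<And>j. j \<in> C \<Longrightarrow> ennreal (c * (real_of_int \<bar>j\<bar> + 1)) \<le> B"
  shows "set_size C \<le> ennreal (2 / c) * B + 3"
proof (cases "B = \<infinity>")
  case True then show ?thesis using cpos by (simp add: ennreal_mult_top)
next
  case False
  then obtain r where r: "B = ennreal r" "0 \<le> r" by (cases B) auto
  define N where "N = nat \<lceil>r / c\<rceil>"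
  have jb: "\<bar>j\<bar> \<le> int N" if "j \<in> C" for j
  proof -
    have "ennreal (c * (real_of_int \<bar>j\<bar> + 1)) \<le> ennreal r" using hb[OF that] r by simp
    then have "c * (real_of_int \<bar>j\<bar> + 1) \<le> r" using r by (simp add: ennreal_le_iff)
    then have "real_of_int \<bar>j\<bar> \<le> r / c" using cpos by (simp add: pos_le_divide_eq algebra_simps)
    then show ?thesis unfolding N_def by linarith
  qed
  have sub: "C \<subseteq> {- int N..int N}" using jb by force
  then have fin: "finite C" by (rule finite_subset) simp
  have "card C \<le> card {- int N..int N}" using sub by (intro card_mono) auto
  also have "\<dots> = 2 * N + 1" by simp
  finally have cc: "real (card C) \<le> 2 * real N + 1" by linarith
  have "0 \<le> r / c" using r cpos by simp
  then have "real N = real_of_int \<lceil>r / c\<rceil>" unfolding N_def by simp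
  then have "real N \<le> r / c + 1" using of_int_ceiling_le_add_one[of "r/c"] by linarith
  then have cr: "real (card C) \<le> 2 / c * r + 3" using cc by simp
  have "set_size C = ennreal (real (card C))" using fin by (simp add: set_size_def ennreal_of_nat_eq_real_of_nat)
  also have "\<dots> \<le> ennreal (2 / c * r + 3)" using cr by (rule ennreal_leI)
  also have "\<dots> = ennreal (2 / c * r) + ennreal 3" using r cpos by (intro ennreal_plus) auto
  also have "ennreal (2 / c * r) = ennreal (2 / c) * ennreal r" using r cpos by (intro ennreal_mult) auto
  finally show ?thesis using r by simp
qed

theorem proposition4p3:
  fixes M :: "'a measure" and D :: "int \<Rightarrow> 'a \<Rightarrow> nat" and \<alpha> :: real and d :: nat
  assumes "prob_space M"
    and "prob_space.indep_vars M (\<lambda>_. count_space UNIV) D UNIV"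
    and "\<And>i. distr M (count_space UNIV) (D i) = distr M (count_space UNIV) (D 0)"
    and "integrable M (\<lambda>\<omega>. (real (D 0 \<omega>))\<^sup>2)"
    and "\<alpha> > 0"
    and "prob_space.expectation M (\<lambda>\<omega>. real (trunc_var D d 0 \<omega>)) < \<alpha> / 18"
  shows "(\<integral>\<^sup>+ \<omega>. set_size (cluster0 D d \<alpha> \<omega>) \<partial>M) < \<infinity>"
proof -
  interpret prob_space M by (rule assms(1))
  define \<gamma> where "\<gamma> = \<alpha> / 18"
  define c where "c = \<alpha> / 7 - \<gamma>"
  have g0: "0 \<le> \<gamma>" and ga: "\<gamma> \<le> \<alpha> / 7" and cpos: "c > 0"
    using assms(5) unfolding \<gamma>_def c_def by auto
  define f where "f v = real (v - d) - \<gamma>" for v :: nat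
  have measD: "D k \<in> measurable M (count_space UNIV)" for k
    using assms(2) unfolding indep_vars_def2 by auto
  have tr_int: "integrable M (\<lambda>\<omega>. g (D k \<omega>)) \<longleftrightarrow> integrable M (\<lambda>\<omega>. g (D 0 \<omega>))" for k and g :: "nat \<Rightarrow> real"
    using integrable_distr_eq[OF measD[of k], of g] integrable_distr_eq[OF measD[of 0], of g] assms(3)[of k]
    by simp
  have tr_eq: "(\<integral>\<omega>. g (D k \<omega>) \<partial>M) = (\<integral>\<omega>. g (D 0 \<omega>) \<partial>M)" for k and g :: "nat \<Rightarrow> real"
    using integral_distr[OF measD[of k], of g] integral_distr[OF measD[of 0], of g] assms(3)[of k]
    by simp
  have mg: "(\<lambda>\<omega>. g (D k \<omega>)) \<in> borel_measurable M" for k and g :: "nat \<Rightarrow> real"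
    by (rule measurable_compose[OF measD[of k]]) simp
  have intX0: "integrable M (\<lambda>\<omega>. real (D 0 \<omega> - d))"
  proof (rule Bochner_Integration.integrable_bound)
    show "integrable M (\<lambda>\<omega>. (real (D 0 \<omega>))\<^sup>2 + 1)" using assms(4) by simp
    show "(\<lambda>\<omega>. real (D 0 \<omega> - d)) \<in> borel_measurable M" by (rule mg)
    show "AE x in M. norm (real (D 0 x - d)) \<le> norm ((real (D 0 x))\<^sup>2 + 1)"
    proof
      fix x
      have "real (D 0 x - d) \<le> real (D 0 x)" by simp
      also have "\<dots> \<le> (real (D 0 x))\<^sup>2 + 1" using abs_le_sq1[of "real (D 0 x)"] by simp
      finally show "norm (real (D 0 x - d)) \<le> norm ((real (D 0 x))\<^sup>2 + 1)" by simp
    qed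
  qed
  have walkb: "(\<integral>\<^sup>+\<omega>. (SUP n. ennreal (\<Sum>i<n. f (D (\<sigma> i) \<omega>))) \<partial>M) < \<infinity>" if inj: "inj \<sigma>" for \<sigma> :: "nat \<Rightarrow> int"
  proof -
    interpret w: walk M "\<lambda>i. D (\<sigma> i)" "distr M (count_space UNIV) (D 0)" f
    proof unfold_locales
      have "indep_vars (\<lambda>_. count_space UNIV) D (\<sigma> ` UNIV)"
        by (rule indep_vars_subset[OF assms(2)]) auto
      then show "indep_vars (\<lambda>_. count_space UNIV) (\<lambda>i. D (\<sigma> i)) UNIV"
        using indep_vars_reindex[where M'="\<lambda>_. count_space UNIV" and X=D and \<sigma>=\<sigma> and I=UNIV] inj by simp
      show "\<And>i. distr M (count_space UNIV) (D (\<sigma> i)) = distr M (count_space UNIV) (D 0)" by (rule assms(3))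
      have "integrable M (\<lambda>\<omega>. (f (D 0 \<omega>))\<^sup>2)"
      proof (rule Bochner_Integration.integrable_bound)
        show "integrable M (\<lambda>\<omega>. 2 * (real (D 0 \<omega>))\<^sup>2 + 2 * \<gamma>\<^sup>2)" using assms(4) by simp
        show "(\<lambda>\<omega>. (f (D 0 \<omega>))\<^sup>2) \<in> borel_measurable M" by (rule mg)
        show "AE x in M. norm ((f (D 0 x))\<^sup>2) \<le> norm (2 * (real (D 0 x))\<^sup>2 + 2 * \<gamma>\<^sup>2)"
        proof
          fix x
          have b: "(a - b)\<^sup>2 \<le> 2 * a\<^sup>2 + 2 * b\<^sup>2" for a b :: real
            using sum_squares_ge_zero[of "a + b" 0] by (simp add: power2_eq_square algebra_simps)
          have h1: "(real (D 0 x - d))\<^sup>2 \<le> (real (D 0 x))\<^sup>2" by (intro power_mono) auto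
          have "(f (D 0 x))\<^sup>2 \<le> 2 * (real (D 0 x))\<^sup>2 + 2 * \<gamma>\<^sup>2"
            using b[of "real (D 0 x - d)" \<gamma>] h1 unfolding f_def by linarith
          then show "norm ((f (D 0 x))\<^sup>2) \<le> norm (2 * (real (D 0 x))\<^sup>2 + 2 * \<gamma>\<^sup>2)" by simp
        qed
      qed
      then show "integrable M (\<lambda>\<omega>. (f (D (\<sigma> 0) \<omega>))\<^sup>2)"
        using tr_int[of "\<lambda>v. (f v)\<^sup>2" "\<sigma> 0"] by simp
      have "expectation (\<lambda>\<omega>. f (D (\<sigma> 0) \<omega>)) = expectation (\<lambda>\<omega>. f (D 0 \<omega>))"
        by (rule tr_eq)
      also have "\<dots> = expectation (\<lambda>\<omega>. real (D 0 \<omega> - d)) - \<gamma>"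
        unfolding f_def using intX0 by (subst Bochner_Integration.integral_diff) (auto simp: prob_space)
      also have "expectation (\<lambda>\<omega>. real (D 0 \<omega> - d)) < \<gamma>"
        using assms(6) unfolding \<gamma>_def trunc_var_def by simp
      finally show "expectation (\<lambda>\<omega>. f (D (\<sigma> 0) \<omega>)) < 0" by simp
    qed
    show ?thesis by (rule w.walk_bound)
  qed
  define R where "R \<omega> = (SUP n. ennreal (\<Sum>i<n. f (D (int i + 1) \<omega>)))" for \<omega>
  define L where "L \<omega> = (SUP n. ennreal (\<Sum>i<n. f (D (- int i - 1) \<omega>)))" for \<omega>
  have "inj (\<lambda>i::nat. int i + 1)" by (auto simp: inj_def)
  from walkb[OF this] have Rb: "integral\<^sup>N M R < \<infinity>" unfolding R_def by simp
  have "inj (\<lambda>i::nat. - int i - 1)" by (auto simp: inj_def)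
  from walkb[OF this] have Lb: "integral\<^sup>N M L < \<infinity>" unfolding L_def by simp
  have X0b: "(\<integral>\<^sup>+\<omega>. ennreal (real (D 0 \<omega> - d)) \<partial>M) < \<infinity>"
    using integrableD(2)[OF intX0] by (simp add: less_top)
  have mf: "(\<lambda>\<omega>. f (D k \<omega>)) \<in> borel_measurable M" for k by (rule mg)
  have mR: "R \<in> borel_measurable M" unfolding R_def using mf by measurable
  have mL: "L \<in> borel_measurable M" unfolding L_def using mf by measurable
  have mX0: "(\<lambda>\<omega>. ennreal (real (D 0 \<omega> - d))) \<in> borel_measurable M" using mg by measurable
  define B where "B \<omega> = ennreal (real (D 0 \<omega> - d)) + R \<omega> + L \<omega>" for \<omega>
  have pw: "set_size (cluster0 D d \<alpha> \<omega>) \<le> ennreal (2 / c) * B \<omega> + 3" for \<omega>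
  proof (rule size_bound[OF cpos])
    fix j assume j: "j \<in> cluster0 D d \<alpha> \<omega>"
    define X where "X k = real (trunc_var D d k \<omega>)" for k
    have cl: "\<exists>m::nat. m \<ge> 1 \<and> \<alpha> * real m \<le> (\<Sum>k\<in>{i - int m..i + int m}. X k)"
      if "min 0 j \<le> i" "i \<le> max 0 j" for i
      using j that unfolding cluster0_def claimed_def X_def by auto
    obtain na nb where nn: "(\<alpha>/7 - \<gamma>) * (real_of_int \<bar>j\<bar> + 1)
           \<le> X 0 + (\<Sum>i<nb. X (int i + 1) - \<gamma>) + (\<Sum>i<na. X (- int i - 1) - \<gamma>)"
      using det[where X=X and \<alpha>=\<alpha> and \<gamma>=\<gamma> and j=j, OF _ assms(5) g0 ga cl] unfolding X_def by auto
    have e1: "(\<Sum>i<nb. X (int i + 1) - \<gamma>) = (\<Sum>i<nb. f (D (int i + 1) \<omega>))"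
      unfolding X_def f_def trunc_var_def ..
    have e2: "(\<Sum>i<na. X (- int i - 1) - \<gamma>) = (\<Sum>i<na. f (D (- int i - 1) \<omega>))"
      unfolding X_def f_def trunc_var_def ..
    have "ennreal (c * (real_of_int \<bar>j\<bar> + 1))
          \<le> ennreal (X 0) + ennreal (\<Sum>i<nb. f (D (int i + 1) \<omega>)) + ennreal (\<Sum>i<na. f (D (- int i - 1) \<omega>))"
      using nn unfolding c_def e1 e2 by (intro ennreal_sum3) (auto simp: X_def)
    also have "\<dots> \<le> B \<omega>"
      unfolding B_def R_def L_def X_def trunc_var_def
      by (intro add_mono order_refl SUP_upper) auto
    finally show "ennreal (c * (real_of_int \<bar>j\<bar> + 1)) \<le> B \<omega>" .
  qed
  have "(\<integral>\<^sup>+ \<omega>. set_size (cluster0 D d \<alpha> \<omega>) \<partial>M) \<le> (\<integral>\<^sup>+ \<omega>. ennreal (2 / c) * B \<omega> + 3 \<partial>M)"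
    by (intro nn_integral_mono pw)
  also have "\<dots> = ennreal (2 / c) * ((\<integral>\<^sup>+\<omega>. ennreal (real (D 0 \<omega> - d)) \<partial>M) + integral\<^sup>N M R + integral\<^sup>N M L) + 3"
    unfolding B_def using mR mL mX0
    by (simp add: nn_integral_add nn_integral_cmult emeasure_space_1)
  also have "\<dots> < \<infinity>" using Rb Lb X0b by (simp add: ennreal_mult_less_top)
  finally show ?thesis .
qed


end
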